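(* For $n_1=2k_1>0$ and $n_2=2k_2+1>0$, $$s_{n_1+n_2}\bigl[\widetilde L(n_1,n_2)\bigr]=\sum_{j=1}^{n_1}(-1)^j\binom{n_1+n_2}{j}=-\binom{n_1+n_2}{1}+\binom{n_1+n_2}{2}-\cdots-\binom{n_1+n_2}{n_1-1}+\binom{n_1+n_2}{n_1}.$$
   Context: Let $\eta$ be the tautological line bundle over $\mathbb CP^{n_1}$, let $p\colon L(n_1,n_2)=\mathbb CP(\eta\oplus\underline{\mathbb C}^{n_2})\to\mathbb CP^{n_1}$ be the projectivisation and $\gamma$ its tautological line bundle. For $n_1=2k_1$, $n_2=2k_2+1$, $\widetilde L(n_1,n_2)$ denotes the manifold $L(n_1,n_2)$ with the stably complex structure defined by the real bundle isomorphism $$\mathcal TL(n_1,n_2)\oplus\underline{\mathbb R}^4\cong (p^*\bar\eta\oplus p^*\eta)^{\oplus k_1}\oplus p^*\bar\eta\oplus(\bar\gamma\otimes p^*\eta)\oplus(\bar\gamma\oplus\gamma)^{\oplus k_2}\oplus\gamma .$$ Its cohomology ring is $\mathbb Z[u,v]/(u^{n_1+1},v^{n_2+1}-uv^{n_2})$ with $u=c_1(p^*\bar\eta)$, $v=c_1(\bar\gamma)$, $\langle u^{n_1}v^{n_2},[\widetilde L]\rangle=1$. For a stably complex manifold of real dimension $2n$, $s_n[M]=\langle s_n(\mathcal TM),[M]\rangle$ where $s_n$ is the Chern-class polynomial corresponding to the power sum $t_1^n+\cdots+t_n^n$. *)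

theory Defs
  imports "HOL-Computational_Algebra.Polynomial"
begin

text \<open>Integral cohomology of L(n1,n2) is modelled as the quotient of
  Z[u,v] by the ideal (u^(n1+1), v^(n2+1) - u v^n2).  Polynomials in u,v are
  represented as int poly poly: outer variable v, coefficients in Z[u].\<close>

definition cls_u :: "int poly poly" where
  "cls_u = [: [:0, 1:] :]"

definition cls_v :: "int poly poly" where
  "cls_v = [:0, 1:]"

text \<open>Pairing with the fundamental class: a Z-linear functional on Z[u,v]
  vanishing on the defining ideal of the cohomology ring and with
  value 1 on u^n1 v^n2.\<close>

definition fundamental_pairing :: "nat \<Rightarrow> nat \<Rightarrow> (int poly poly \<Rightarrow> int) \<Rightarrow> bool" where
  "fundamental_pairing n1 n2 ev \<longleftrightarrow>
     (\<forall>p q. ev (p + q) = ev p + ev q) \<and>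
     (\<forall>a. ev (a * cls_u ^ (n1 + 1)) = 0) \<and>
     (\<forall>b. ev (b * (cls_v ^ (n2 + 1) - cls_u * cls_v ^ n2)) = 0) \<and>
     ev (cls_u ^ n1 * cls_v ^ n2) = 1"

text \<open>First Chern classes of the complex line bundles in the splitting
  of the stable tangent bundle of the stably complex manifold tilde-L(2 k1, 2 k2 + 1):
  (p*bar eta + p*eta)^k1 + p*bar eta + (bar gamma tensor p*eta) + (bar gamma + gamma)^k2 + gamma.
  c1(p*bar eta) = u, c1(p*eta) = -u, c1(bar gamma) = v, c1(gamma) = -v,
  c1(bar gamma tensor p*eta) = v - u.\<close>

definition chern_roots_Ltilde :: "nat \<Rightarrow> nat \<Rightarrow> int poly poly list" where
  "chern_roots_Ltilde k1 k2 =
     concat (replicate k1 [cls_u, - cls_u]) @ [cls_u] @ [cls_v - cls_u]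
     @ concat (replicate k2 [cls_v, - cls_v]) @ [- cls_v]"

text \<open>s_n of a sum of line bundles (splitting principle): power sum of the
  first Chern classes.\<close>

definition s_class :: "nat \<Rightarrow> int poly poly list \<Rightarrow> int poly poly" where
  "s_class n roots = sum_list (map (\<lambda>x. x ^ n) roots)"

end

theory Submission
  imports Defs
begin

lemma pairs_cancel:
  assumes "odd N"
  shows "sum_list (map (\<lambda>x. x ^ N) (concat (replicate k [a, - (a::int poly poly)]))) = 0"
  using assms by (induction k) (auto simp: power_minus_odd)

lemma sum_ev:
  assumes add: "\<forall>p q. ev (p + q) = ev p + (ev q::int)" and "finite A"
  shows "ev (\<Sum>x\<in>A. f x) = (\<Sum>x\<in>A. ev (f x))"
proof -
  have z: "ev 0 = 0" using add[rule_format, of 0 0] by simp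
  from assms(2) show ?thesis
    by (induction A rule: finite_induct) (auto simp: z add)
qed

lemma ev_basic:
  assumes add: "\<forall>p q. ev (p + q) = ev p + (ev q::int)"
  shows "ev 0 = 0" "\<And>p. ev (- p) = - ev p" "\<And>p q. ev (p - q) = ev p - ev q"
    "\<And>f A. finite A \<Longrightarrow> ev (\<Sum>x\<in>A. f x) = (\<Sum>x\<in>A. ev (f x))"
    "\<And>c p. ev (of_int c * p) = c * ev p"
proof -
  show z: "ev 0 = 0" using add[rule_format, of 0 0] by simp
  show n: "\<And>p. ev (- p) = - ev p"
  proof -
    fix p have "ev (- p) + ev p = 0" using add[rule_format, of "- p" p] z by simp
    then show "ev (- p) = - ev p" by simp
  qed
  show "\<And>p q. ev (p - q) = ev p - ev q"
  proof -
    fix p q show "ev (p - q) = ev p - ev q" using add[rule_format, of p "- q"] n[of q] by simp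
  qed
  show "\<And>f A. finite A \<Longrightarrow> ev (\<Sum>x\<in>A. f x) = (\<Sum>x\<in>A. ev (f x))"
    by (rule sum_ev[OF add])
  have nat: "ev (of_nat c * p) = int c * ev p" for c p
  proof (induction c)
    case 0 then show ?case using z by simp
  next
    case (Suc c)
    have "of_nat (Suc c) * p = p + of_nat c * p" by (simp add: distrib_right)
    then show ?case using Suc add by (simp add: distrib_right)
  qed
  show "\<And>c p. ev (of_int c * p) = c * ev p"
  proof -
    fix c :: int and p
    show "ev (of_int c * p) = c * ev p"
    proof (cases "c \<ge> 0")
      case True
      then have "c = int (nat c)" by simp
      then show ?thesis using nat[of "nat c" p] by (metis of_int_of_nat_eq)
    next
      case False
      then have c: "c = - int (nat (- c))" by simp
      have "of_int c * p = - (of_nat (nat (- c)) * p)"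
        by (subst c) simp
      then show ?thesis using nat[of "nat (- c)" p] n c by simp
    qed
  qed
qed

theorem lemma10p1:
  fixes n1 n2 k1 k2 :: nat and ev :: "int poly poly \<Rightarrow> int"
  assumes "n1 = 2 * k1" and "n2 = 2 * k2 + 1" and "n1 > 0" and "n2 > 0"
    and "fundamental_pairing n1 n2 ev"
  shows "ev (s_class (n1 + n2) (chern_roots_Ltilde k1 k2))
           = (\<Sum>j = 1..n1. (-1) ^ j * int ((n1 + n2) choose j))"
proof -
  define N where "N = n1 + n2"
  define u where "u = cls_u"
  define v where "v = cls_v"
  have oddN: "odd N" using assms(1,2) N_def by simp
  have add: "\<forall>p q. ev (p + q) = ev p + ev q"
    and U: "\<And>a. ev (a * u ^ (n1 + 1)) = 0"
    and V: "\<And>b. ev (b * (v ^ (n2 + 1) - u * v ^ n2)) = 0"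
    and one: "ev (u ^ n1 * v ^ n2) = 1"
    using assms(5) unfolding fundamental_pairing_def u_def v_def by auto
  note B = ev_basic[OF add]
  have U2: "ev (a * u ^ m) = 0" if "m > n1" for a m
  proof -
    have "a * u ^ m = (a * u ^ (m - n1 - 1)) * u ^ (n1 + 1)"
    proof -
      have "m = (m - n1 - 1) + (n1 + 1)" using that by simp
      then have "u ^ m = u ^ (m - n1 - 1) * u ^ (n1 + 1)" by (metis power_add)
      then show ?thesis by (simp add: mult.assoc)
    qed
    then show ?thesis using U by metis
  qed
  have V2: "ev (b * v ^ (n2 + 1)) = ev (b * u * v ^ n2)" for b
    using V[of b] B(3) by (simp add: right_diff_distrib mult.assoc)
  have V3: "ev (u ^ j * v ^ (n2 + t)) = ev (u ^ (j + t) * v ^ n2)" for j t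
  proof (induction t arbitrary: j)
    case 0 then show ?case by simp
  next
    case (Suc t)
    have eq: "u ^ j * v ^ (n2 + Suc t) = (u ^ j * v ^ t) * v ^ (n2 + 1)"
      by (simp add: algebra_simps power_add)
    have "ev (u ^ j * v ^ (n2 + Suc t)) = ev ((u ^ j * v ^ t) * u * v ^ n2)"
      unfolding eq by (rule V2)
    also have "(u ^ j * v ^ t) * u * v ^ n2 = u ^ (Suc j) * v ^ (n2 + t)"
      by (simp add: algebra_simps power_add)
    finally have "ev (u ^ j * v ^ (n2 + Suc t)) = ev (u ^ (Suc j) * v ^ (n2 + t))" .
    also have "\<dots> = ev (u ^ (Suc j + t) * v ^ n2)" by (rule Suc.IH)
    finally show ?case by simp
  qed
  have E: "ev (u ^ j * v ^ (N - j)) = (if j \<le> n1 then 1 else 0)" for j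
  proof (cases "j \<le> n1")
    case True
    have "N - j = n2 + (n1 - j)" using True N_def by simp
    then show ?thesis using V3[of j "n1 - j"] True one by simp
  next
    case False
    then show ?thesis using U2[of j "v ^ (N - j)"] by (simp add: mult.commute)
  qed
  have s: "s_class N (chern_roots_Ltilde k1 k2) = u ^ N + (v - u) ^ N - v ^ N"
    unfolding s_class_def chern_roots_Ltilde_def u_def v_def
    using pairs_cancel[OF oddN] oddN by (simp add: power_minus_odd)
  have uN: "ev (u ^ N) = 0" using U2[of N 1] N_def assms(4) by simp
  have bin: "(v - u) ^ N = (\<Sum>k\<le>N. of_int ((-1) ^ k * int (N choose k)) * (u ^ k * v ^ (N - k)))"
  proof -
    have "(v - u) ^ N = (- u + v) ^ N" by simp
    also have "\<dots> = (\<Sum>k\<le>N. of_nat (N choose k) * (- u) ^ k * v ^ (N - k))"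
      by (rule binomial_ring)
    also have "\<dots> = (\<Sum>k\<le>N. of_int ((-1) ^ k * int (N choose k)) * (u ^ k * v ^ (N - k)))"
      by (rule sum.cong) (auto simp: power_minus' algebra_simps)
    finally show ?thesis .
  qed
  have "ev ((v - u) ^ N) = (\<Sum>k\<le>N. (-1) ^ k * int (N choose k) * (if k \<le> n1 then 1 else 0))"
    unfolding bin B(4)[OF finite_atMost]
  proof (rule sum.cong)
    fix k assume "k \<in> {..N}"
    show "ev (of_int ((-1) ^ k * int (N choose k)) * (u ^ k * v ^ (N - k)))
        = (-1) ^ k * int (N choose k) * (if k \<le> n1 then 1 else 0)"
      by (subst B(5)) (simp only: E)
  qed simp
  also have "\<dots> = (\<Sum>k\<le>n1. (-1) ^ k * int (N choose k))"
  proof -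
    have st: "{k\<in>{..N}. k \<le> n1} = {..n1}" using N_def by auto
    have "(\<Sum>k\<le>N. (-1) ^ k * int (N choose k) * (if k \<le> n1 then 1 else 0))
       = (\<Sum>k\<le>N. if k \<le> n1 then (-1) ^ k * int (N choose k) else 0)"
      by (rule sum.cong) auto
    also have "\<dots> = (\<Sum>k\<in>{k\<in>{..N}. k \<le> n1}. (-1) ^ k * int (N choose k))"
      by (rule sum.inter_filter[symmetric]) simp
    finally show ?thesis unfolding st .
  qed
  also have "\<dots> = 1 + (\<Sum>k = 1..n1. (-1) ^ k * int (N choose k))"
    by (simp add: atMost_atLeast0 sum.atLeast_Suc_atMost)
  finally have vu: "ev ((v - u) ^ N) = 1 + (\<Sum>k = 1..n1. (-1) ^ k * int (N choose k))" .
  have vN: "ev (v ^ N) = 1" using E[of 0] by simp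
  show ?thesis
    unfolding N_def[symmetric] s
    using vu vN uN add B(3) by simp
qed

end
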